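(* Let $\mathbb{X}$ be a regular CW complex equipped with an acyclic partial matching $\mu$, and let $\Sigma = \{(x_\bullet > y_\bullet)\}$ denote the collection of entrance paths of $\mathbb{X}$ which correspond to the matchings $\mu(y_\bullet) = x_\bullet$. Then $\Sigma$ is a Morse system on the entrance path category $\mathbf{Ent}\,\mathbb{X}$.
   Context: A p-category is a small category enriched over posets; $f\Rightarrow g$ denotes the order on a hom-poset and $f\circ g$ denotes composition ``$f$ then $g$''. A morphism $f:x\to y$ is an atom if it is minimal in $\mathbf{E}(x,y)$, $x=y$ implies $f=1_x$, and $g\circ h\Rightarrow f$ with $g:x\to z$, $h:z\to y$ forces $(g,h)=(1_x,f)$ or $(f,1_y)$. A p-category $\mathbf{E}$ is cellular if every nonempty hom-poset contains an atom. For a regular CW complex, $x>y$ means the closure of cell $y$ lies in the boundary of $x$; the entrance path category $\mathbf{Ent}\,\mathbb{X}$ has cells as objects, strictly descending sequences $(x=x_0>\cdots>x_k=y)$ as morphisms $x\to y$, ordered by subsequence inclusion, composed by concatenation. An acyclic partial matching is a partition of cells into $D,U,M$ with a bijection $\mu:D\to U$ such that each $d$ is a codimension-one face of $\mu(d)$ and the transitive closure of ($d\prec_\mu d'$ iff $d$ is a codimension-one face of $\mu(d')$) is a partial order. A Morse system on a cellular category $\mathbf{E}$ is a collection $\Sigma=\{f_\bullet:x_\bullet\to y_\bullet\}$ satisfying: (Exhaustion) each $f:x\to y$ in $\Sigma$ is the atom of $\mathbf{E}(x,y)$ with $x\neq y$, and no other morphism of $\Sigma$ has as source or target any $w$ with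 $\mathbf{E}(x,w)\neq\varnothing\neq\mathbf{E}(w,y)$; (Order) the transitive closure of $f_0\blacktriangleright f_1$ iff $\mathbf{E}(x_0,y_1)\neq\varnothing$ is a partial order on $\Sigma$; (Lifting) for distinct $f_0,f_1\in\Sigma$, if $g:x_0\to x_1$ and $g':y_0\to y_1$ satisfy $f_0\circ g'\Rightarrow g\circ f_1$, then there is $p:y_0\to x_1$ with $f_0\circ p\Rightarrow g$ and $g'\Rightarrow p\circ f_1$; (Switching) for distinct $f_0,f_1\in\Sigma$, if $\mathbf{E}(x_0,x_1)$ and $\mathbf{E}(y_0,y_1)$ are nonempty with atoms $h,\ell$, and some $v:x_0\to y_1$ satisfies $f_0\circ\ell\Rightarrow v$ and $h\circ f_1\Rightarrow v$, then $\mathbf{E}(y_0,x_1)$ is nonempty and its atom $q$ satisfies $f_0\circ q\circ f_1\Rightarrow v$. *)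

theory Defs
  imports Main "HOL-Library.Sublist"
begin

text \<open>A p-category is presented by
  hom :: objects => objects => morphism set,
  cmp f g  = composition "f then g",
  ident x   = identity 1_x,
  le f g    = the order f => g on hom-posets.\<close>

definition is_atom ::
  "('o \<Rightarrow> 'o \<Rightarrow> 'm set) \<Rightarrow> ('m \<Rightarrow> 'm \<Rightarrow> 'm) \<Rightarrow> ('o \<Rightarrow> 'm) \<Rightarrow> ('m \<Rightarrow> 'm \<Rightarrow> bool)
   \<Rightarrow> 'm \<Rightarrow> 'o \<Rightarrow> 'o \<Rightarrow> bool" where
  "is_atom hom cmp ident le f x y \<longleftrightarrow>
     f \<in> hom x y \<and>
     (\<forall>g\<in>hom x y. le g f \<longrightarrow> g = f) \<and>
     (x = y \<longrightarrow> f = ident x) \<and>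
     (\<forall>z g h. g \<in> hom x z \<and> h \<in> hom z y \<and> le (cmp g h) f \<longrightarrow>
        (g, h) = (ident x, f) \<or> (g, h) = (f, ident y))"

definition cellular ::
  "('o \<Rightarrow> 'o \<Rightarrow> 'm set) \<Rightarrow> ('m \<Rightarrow> 'm \<Rightarrow> 'm) \<Rightarrow> ('o \<Rightarrow> 'm) \<Rightarrow> ('m \<Rightarrow> 'm \<Rightarrow> bool) \<Rightarrow> bool" where
  "cellular hom cmp ident le \<longleftrightarrow>
     (\<forall>x y. hom x y \<noteq> {} \<longrightarrow> (\<exists>f. is_atom hom cmp ident le f x y))"

text \<open>The order relation f0 |> f1 iff E(x0,y1) nonempty; its transitive closure must be
  a partial order (it is automatically transitive and reflexive on S, so the
  requirement is antisymmetry).\<close>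

definition morse_system ::
  "('o \<Rightarrow> 'o \<Rightarrow> 'm set) \<Rightarrow> ('m \<Rightarrow> 'm \<Rightarrow> 'm) \<Rightarrow> ('o \<Rightarrow> 'm) \<Rightarrow> ('m \<Rightarrow> 'm \<Rightarrow> bool)
   \<Rightarrow> ('m \<times> 'o \<times> 'o) set \<Rightarrow> bool" where
  "morse_system hom cmp ident le S \<longleftrightarrow>
     cellular hom cmp ident le \<and>
     \<comment> \<open>Exhaustion\<close>
     (\<forall>(f, x, y)\<in>S. f \<in> hom x y \<and> x \<noteq> y \<and> is_atom hom cmp ident le f x y \<and>
        (\<forall>(f', x', y')\<in>S. (f', x', y') \<noteq> (f, x, y) \<longrightarrow>
           (\<forall>w. hom x w \<noteq> {} \<and> hom w y \<noteq> {} \<longrightarrow> x' \<noteq> w \<and> y' \<noteq> w))) \<and>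
     \<comment> \<open>Order\<close>
     antisym ({((f0, x0, y0), (f1, x1, y1)). (f0, x0, y0) \<in> S \<and> (f1, x1, y1) \<in> S
                  \<and> hom x0 y1 \<noteq> {}}\<^sup>+) \<and>
     \<comment> \<open>Lifting\<close>
     (\<forall>(f0, x0, y0)\<in>S. \<forall>(f1, x1, y1)\<in>S. (f0, x0, y0) \<noteq> (f1, x1, y1) \<longrightarrow>
        (\<forall>g g'. g \<in> hom x0 x1 \<and> g' \<in> hom y0 y1 \<and> le (cmp f0 g') (cmp g f1) \<longrightarrow>
           (\<exists>p\<in>hom y0 x1. le (cmp f0 p) g \<and> le g' (cmp p f1)))) \<and>
     \<comment> \<open>Switching\<close>
     (\<forall>(f0, x0, y0)\<in>S. \<forall>(f1, x1, y1)\<in>S. (f0, x0, y0) \<noteq> (f1, x1, y1) \<longrightarrow>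
        (\<forall>h l v. is_atom hom cmp ident le h x0 x1 \<and> is_atom hom cmp ident le l y0 y1 \<and>
            v \<in> hom x0 y1 \<and> le (cmp f0 l) v \<and> le (cmp h f1) v \<longrightarrow>
           hom y0 x1 \<noteq> {} \<and>
           (\<forall>q. is_atom hom cmp ident le q y0 x1 \<longrightarrow> le (cmp (cmp f0 q) f1) v)))"

text \<open>A cell complex is given by its set of cells X, the face relation gt x y
  ("x > y": the closure of y lies in the boundary of x) and the dimension of cells.\<close>

definition face_poset :: "'a set \<Rightarrow> ('a \<Rightarrow> 'a \<Rightarrow> bool) \<Rightarrow> ('a \<Rightarrow> nat) \<Rightarrow> bool" where
  "face_poset X gt dim \<longleftrightarrow>
     (\<forall>x\<in>X. \<not> gt x x) \<and>
     (\<forall>x\<in>X. \<forall>y\<in>X. \<forall>z\<in>X. gt x y \<longrightarrow> gt y z \<longrightarrow> gt x z) \<and>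
     (\<forall>x\<in>X. \<forall>y\<in>X. gt x y \<longrightarrow> dim y < dim x)"

definition codim_one_face :: "('a \<Rightarrow> 'a \<Rightarrow> bool) \<Rightarrow> ('a \<Rightarrow> nat) \<Rightarrow> 'a \<Rightarrow> 'a \<Rightarrow> bool" where
  "codim_one_face gt dim y x \<longleftrightarrow> gt x y \<and> dim x = dim y + 1"

definition acyclic_partial_matching ::
  "'a set \<Rightarrow> ('a \<Rightarrow> 'a \<Rightarrow> bool) \<Rightarrow> ('a \<Rightarrow> nat) \<Rightarrow> 'a set \<Rightarrow> 'a set \<Rightarrow> 'a set \<Rightarrow> ('a \<Rightarrow> 'a) \<Rightarrow> bool" where
  "acyclic_partial_matching X gt dim D U M \<mu> \<longleftrightarrow>
     D \<union> U \<union> M = X \<and> D \<inter> U = {} \<and> D \<inter> M = {} \<and> U \<inter> M = {} \<and>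
     bij_betw \<mu> D U \<and>
     (\<forall>d\<in>D. codim_one_face gt dim d (\<mu> d)) \<and>
     antisym ({(d, d'). d \<in> D \<and> d' \<in> D \<and> codim_one_face gt dim d (\<mu> d')}\<^sup>+)"

text \<open>Morphisms x -> y are the strictly descending sequences x = x0 > ... > xk = y,
  encoded as nonempty lists; composition is concatenation (sharing the middle
  object), identities are one-element lists, and the order is subsequence inclusion.\<close>

definition ent_hom :: "'a set \<Rightarrow> ('a \<Rightarrow> 'a \<Rightarrow> bool) \<Rightarrow> 'a \<Rightarrow> 'a \<Rightarrow> 'a list set" where
  "ent_hom X gt x y = {xs. xs \<noteq> [] \<and> hd xs = x \<and> last xs = y \<and> set xs \<subseteq> X \<and> sorted_wrt gt xs}"

definition ent_comp :: "'a list \<Rightarrow> 'a list \<Rightarrow> 'a list" where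
  "ent_comp f g = f @ tl g"

definition ent_id :: "'a \<Rightarrow> 'a list" where
  "ent_id x = [x]"

definition ent_le :: "'a list \<Rightarrow> 'a list \<Rightarrow> bool" where
  "ent_le f g \<longleftrightarrow> subseq f g"

definition matching_paths :: "'a set \<Rightarrow> ('a \<Rightarrow> 'a) \<Rightarrow> ('a list \<times> 'a \<times> 'a) set" where
  "matching_paths D \<mu> = {([x, y], x, y) | x y. y \<in> D \<and> x = \<mu> y}"

end

theory Submission imports Defs begin

lemma subseq_set: "subseq xs ys \<Longrightarrow> set xs \<subseteq> set ys"
  by (auto elim: list_emb_set)

lemma sorted_hd: "sorted_wrt R (h # t) \<Longrightarrow> a \<in> set t \<Longrightarrow> R h a" by simp

lemma sorted_last: "sorted_wrt R xs \<Longrightarrow> xs \<noteq> [] \<Longrightarrow> a \<in> set xs \<Longrightarrow> a = last xs \<or> R a (last xs)"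
proof -
  assume s: "sorted_wrt R xs" and ne: "xs \<noteq> []" and a: "a \<in> set xs"
  have e: "xs = butlast xs @ [last xs]" using ne by simp
  have "sorted_wrt R (butlast xs @ [last xs])" using s e by simp
  then have "\<forall>b\<in>set (butlast xs). R b (last xs)" by (simp add: sorted_wrt_append)
  moreover have "a \<in> set (butlast xs) \<or> a = last xs" using a e
    by (metis Un_iff empty_iff empty_set set_ConsD set_append)
  ultimately show ?thesis by blast
qed

lemma hom_mem:
  assumes "xs \<in> ent_hom X gt x y" "a \<in> set xs"
  shows "(a = x \<or> gt x a) \<and> (a = y \<or> gt a y) \<and> a \<in> X"
proof -
  from assms(1) have ne: "xs \<noteq> []" and h: "hd xs = x" and l: "last xs = y" and s: "sorted_wrt gt xs"
    and X: "set xs \<subseteq> X" by (auto simp: ent_hom_def)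
  obtain t where xs: "xs = x # t" using ne h by (cases xs) auto
  have "a = x \<or> gt x a" using assms(2) s xs by auto
  moreover have "a = y \<or> gt a y" using sorted_last[OF s ne assms(2)] l by simp
  ultimately show ?thesis using X assms(2) by auto
qed

lemma hom_ends:
  assumes "xs \<in> ent_hom X gt x y"
  shows "x \<in> set xs" "y \<in> set xs" "x \<in> X" "y \<in> X" "x = y \<or> gt x y"
proof -
  from assms have ne: "xs \<noteq> []" and h: "hd xs = x" and l: "last xs = y" and X: "set xs \<subseteq> X"
    by (auto simp: ent_hom_def)
  show 1: "x \<in> set xs" using ne h by auto
  show 2: "y \<in> set xs" using ne l by auto
  show "x \<in> X" "y \<in> X" using 1 2 X by auto
  show "x = y \<or> gt x y" using hom_mem[OF assms 2] by blast
qed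

lemma fp_irr: "face_poset X gt dim \<Longrightarrow> x \<in> X \<Longrightarrow> \<not> gt x x"
  by (simp add: face_poset_def)
lemma fp_trans: "face_poset X gt dim \<Longrightarrow> x \<in> X \<Longrightarrow> y \<in> X \<Longrightarrow> z \<in> X \<Longrightarrow> gt x y \<Longrightarrow> gt y z \<Longrightarrow> gt x z"
  unfolding face_poset_def by blast
lemma fp_dim: "face_poset X gt dim \<Longrightarrow> x \<in> X \<Longrightarrow> y \<in> X \<Longrightarrow> gt x y \<Longrightarrow> dim y < dim x"
  unfolding face_poset_def by blast

lemma subseq_of_set:
  assumes fp: "face_poset X gt dim"
  shows "sorted_wrt gt ys \<Longrightarrow> set ys \<subseteq> X \<Longrightarrow> sorted_wrt gt xs \<Longrightarrow> set xs \<subseteq> set ys \<Longrightarrow> subseq xs ys"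
proof (induction ys arbitrary: xs)
  case Nil then show ?case by simp
next
  case (Cons b bs)
  show ?case
  proof (cases xs)
    case Nil then show ?thesis by simp
  next
    case (Cons a as)
    have aX: "a \<in> X" using Cons Cons.prems by auto
    have bX: "b \<in> X" using Cons.prems by auto
    show ?thesis
    proof (cases "a = b")
      case True
      have "set as \<subseteq> set bs"
      proof
        fix c assume c: "c \<in> set as"
        have "gt a c" using Cons.prems(3) Cons c by simp
        then have "c \<noteq> b" using True fp_irr[OF fp aX] by auto
        then show "c \<in> set bs" using Cons.prems(4) Cons c by auto
      qed
      then have "subseq as bs" using Cons.IH Cons.prems Cons by auto
      then show ?thesis using Cons True by simp
    next
      case False
      have abs: "a \<in> set bs" using Cons.prems(4) Cons False by auto
      have gba: "gt b a" using Cons.prems(1) abs by simp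
      have "set xs \<subseteq> set bs"
      proof
        fix c assume c: "c \<in> set xs"
        show "c \<in> set bs"
        proof (cases "c = a")
          case True then show ?thesis using abs by simp
        next
          case False
          then have "gt a c" using Cons.prems(3) Cons c by simp
          then have "c \<noteq> b" using gba fp_trans[OF fp bX aX bX] fp_irr[OF fp bX] by auto
          then show ?thesis using Cons.prems(4) c by auto
        qed
      qed
      then have "subseq xs bs" using Cons.IH Cons.prems by auto
      then show ?thesis by (rule list_emb_Cons)
    qed
  qed
qed

lemma le_iff:
  assumes fp: "face_poset X gt dim" and "xs \<in> ent_hom X gt a b" "ys \<in> ent_hom X gt c d"
  shows "ent_le xs ys \<longleftrightarrow> set xs \<subseteq> set ys"
proof
  assume "ent_le xs ys" then show "set xs \<subseteq> set ys" unfolding ent_le_def by (rule subseq_set)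
next
  assume "set xs \<subseteq> set ys" show "ent_le xs ys"
  proof -
    have "sorted_wrt gt ys" "set ys \<subseteq> X" "sorted_wrt gt xs" using assms(2,3) unfolding ent_hom_def by auto
    then show ?thesis unfolding ent_le_def using subseq_of_set[OF fp] \<open>set xs \<subseteq> set ys\<close> by blast
  qed
qed

lemma comp_hom:
  assumes fp: "face_poset X gt dim" and f: "f \<in> ent_hom X gt x z" and g: "g \<in> ent_hom X gt z y"
  shows "ent_comp f g \<in> ent_hom X gt x y \<and> set (ent_comp f g) = set f \<union> set g"
proof -
  from g obtain t where gt_: "g = z # t" unfolding ent_hom_def by (cases g) auto
  have fne: "f \<noteq> []" "hd f = x" "last f = z" "sorted_wrt gt f" "set f \<subseteq> X" using f by (auto simp: ent_hom_def)
  have gs: "sorted_wrt gt t" "set t \<subseteq> X" "last g = y" using g gt_ by (auto simp: ent_hom_def)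
  have cross: "\<forall>a\<in>set f. \<forall>b\<in>set t. gt a b"
  proof (intro ballI)
    fix a b assume a: "a \<in> set f" and b: "b \<in> set t"
    have zb: "gt z b" using g gt_ b by (auto simp: ent_hom_def)
    have az: "a = z \<or> gt a z" "a \<in> X" using hom_mem[OF f a] by auto
    have bX: "b \<in> X" using gs b by auto
    have zX: "z \<in> X" using hom_ends[OF g] by auto
    show "gt a b"
    proof (cases "a = z")
      case True then show ?thesis using zb by simp
    next
      case False then show ?thesis using az zb fp_trans[OF fp az(2) zX bX] by auto
    qed
  qed
  have "last (f @ t) = y"
  proof (cases "t = []")
    case True then show ?thesis using fne gs gt_ by simp
  next
    case False then show ?thesis using gs gt_ by simp
  qed
  then have "ent_comp f g \<in> ent_hom X gt x y"
    using fne gs cross gt_ unfolding ent_comp_def ent_hom_def by (auto simp: sorted_wrt_append)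
  moreover have "set (ent_comp f g) = set f \<union> set g"
    using gt_ hom_ends(2)[OF f] unfolding ent_comp_def by auto
  ultimately show ?thesis by simp
qed


lemma hom_refl:
  assumes fp: "face_poset X gt dim" and x: "x \<in> X"
  shows "ent_hom X gt x x = {[x]}"
proof
  show "{[x]} \<subseteq> ent_hom X gt x x" using x by (simp add: ent_hom_def)
next
  show "ent_hom X gt x x \<subseteq> {[x]}"
  proof
    fix xs assume xs: "xs \<in> ent_hom X gt x x"
    obtain t where t: "xs = x # t" using xs unfolding ent_hom_def by (cases xs) auto
    have "t = []"
    proof (rule ccontr)
      assume "t \<noteq> []"
      then have "last t = x" "last t \<in> set t" using xs t unfolding ent_hom_def by auto
      then have "gt x x" using xs t unfolding ent_hom_def by auto
      then show False using fp_irr[OF fp x] by simp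
    qed
    then show "xs \<in> {[x]}" using t by simp
  qed
qed

lemma two:
  assumes "length l \<le> 2" "l \<noteq> []" "hd l = a" "last l = b" "a \<noteq> b"
  shows "l = [a, b]"
proof -
  obtain p t where l: "l = p # t" using assms(2) by (cases l) auto
  show ?thesis
  proof (cases t)
    case Nil then show ?thesis using assms l by simp
  next
    case (Cons q r)
    then have "r = []" using assms(1) l by simp
    then show ?thesis using assms l Cons by simp
  qed
qed

lemma atom_refl:
  assumes fp: "face_poset X gt dim" and x: "x \<in> X"
  shows "is_atom (ent_hom X gt) ent_comp ent_id ent_le [x] x x"
  unfolding is_atom_def
proof (intro conjI allI impI ballI)
  show "[x] \<in> ent_hom X gt x x" using hom_refl[OF fp x] by simp
  show "\<And>g. g \<in> ent_hom X gt x x \<Longrightarrow> ent_le g [x] \<Longrightarrow> g = [x]" using hom_refl[OF fp x] by simp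
  show "[x] = ent_id x" by (simp add: ent_id_def)
  fix z g h
  assume a: "g \<in> ent_hom X gt x z \<and> h \<in> ent_hom X gt z x \<and> ent_le (ent_comp g h) [x]"
  have zX: "z \<in> X" using hom_ends(4)[of g X gt x z] a by blast
  have "z = x"
  proof (rule ccontr)
    assume "z \<noteq> x"
    then have "gt x z" "gt z x" using hom_ends(5)[of g X gt x z] hom_ends(5)[of h X gt z x] a by auto
    then show False using fp_trans[OF fp x zX x] fp_irr[OF fp x] by auto
  qed
  then have "g = [x]" "h = [x]" using a hom_refl[OF fp x] by auto
  then show "(g, h) = (ent_id x, [x]) \<or> (g, h) = ([x], ent_id x)" by (simp add: ent_id_def)
qed

lemma atom_pair:
  assumes fp: "face_poset X gt dim" and xy: "gt x y" and x: "x \<in> X" and y: "y \<in> X"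
  shows "is_atom (ent_hom X gt) ent_comp ent_id ent_le [x, y] x y"
  unfolding is_atom_def
proof (intro conjI allI impI ballI)
  have ne: "x \<noteq> y" using xy fp_irr[OF fp x] by auto
  show xyh: "[x, y] \<in> ent_hom X gt x y" using xy x y by (simp add: ent_hom_def)
  show "\<And>g. g \<in> ent_hom X gt x y \<Longrightarrow> ent_le g [x, y] \<Longrightarrow> g = [x, y]"
  proof -
    fix g assume g: "g \<in> ent_hom X gt x y" and le: "ent_le g [x, y]"
    have "subseq g [x, y]" using le by (simp add: ent_le_def)
    from list_emb_length[OF this] have "length g \<le> 2" by simp
    then show "g = [x, y]" using two[of g x y] g ne by (simp add: ent_hom_def)
  qed
  show "x = y \<Longrightarrow> [x, y] = ent_id x" using ne by simp
  fix z g h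
  assume a: "g \<in> ent_hom X gt x z \<and> h \<in> ent_hom X gt z y \<and> ent_le (ent_comp g h) [x, y]"
  have g: "g \<in> ent_hom X gt x z" and h: "h \<in> ent_hom X gt z y" using a by auto
  have "subseq (g @ tl h) [x, y]" using a by (simp add: ent_le_def ent_comp_def)
  from list_emb_length[OF this] have len: "length (g @ tl h) \<le> 2" by simp
  obtain tg where tg: "g = x # tg" using g unfolding ent_hom_def by (cases g) auto
  obtain th where th: "h = z # th" using h unfolding ent_hom_def by (cases h) auto
  show "(g, h) = (ent_id x, [x, y]) \<or> (g, h) = ([x, y], ent_id y)"
  proof (cases "tg = []")
    case True
    then have "z = x" using g tg unfolding ent_hom_def by simp
    then have "h = [x, y]" using two[of h x y] h len tg th ne True unfolding ent_hom_def by simp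
    then show ?thesis using tg True by (simp add: ent_id_def)
  next
    case False
    then have "length tg \<ge> 1" by (cases tg) auto
    moreover have e: "length (g @ tl h) = Suc (length tg + length th)" "length g = Suc (length tg)" using tg th by simp_all
    ultimately have "length th = 0" "length g \<le> 2" using len by linarith+
    then have "th = []" "length g \<le> 2" by auto
    then have hz: "h = [z]" "z = y" using th h unfolding ent_hom_def by auto
    then have "g = [x, y]" using two[of g x y] g \<open>length g \<le> 2\<close> ne unfolding ent_hom_def by simp
    then show ?thesis using hz by (simp add: ent_id_def)
  qed
qed

lemma atom_set:
  assumes fp: "face_poset X gt dim" and q: "is_atom (ent_hom X gt) ent_comp ent_id ent_le q a b"
  shows "set q = {a, b}" "q \<in> ent_hom X gt a b"
proof -
  show qh: "q \<in> ent_hom X gt a b" using q unfolding is_atom_def by blast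
  show "set q = {a, b}"
  proof (cases "a = b")
    case True
    then have "q = [a]" using q unfolding is_atom_def ent_id_def by blast
    then show ?thesis using True by simp
  next
    case False
    then have ab: "gt a b" "a \<in> X" "b \<in> X" using hom_ends[OF qh] by auto
    have pr: "[a, b] \<in> ent_hom X gt a b" using ab by (simp add: ent_hom_def)
    have "set [a, b] \<subseteq> set q" using hom_ends(1,2)[OF qh] by simp
    then have "ent_le [a, b] q" using le_iff[OF fp pr qh] by simp
    then have "[a, b] = q" using q pr unfolding is_atom_def by blast
    then show ?thesis by auto
  qed
qed

lemma cellular_ent:
  assumes fp: "face_poset X gt dim"
  shows "cellular (ent_hom X gt) ent_comp ent_id ent_le"
  unfolding cellular_def
proof (intro allI impI)
  fix x y assume "ent_hom X gt x y \<noteq> {}"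
  then obtain f where f: "f \<in> ent_hom X gt x y" by blast
  show "\<exists>f. is_atom (ent_hom X gt) ent_comp ent_id ent_le f x y"
  proof (cases "x = y")
    case True then show ?thesis using atom_refl[OF fp] hom_ends[OF f] by blast
  next
    case False then show ?thesis using atom_pair[OF fp] hom_ends[OF f] by blast
  qed
qed

lemma hd_char:
  assumes fp: "face_poset X gt dim" and "sorted_wrt gt xs" "set xs \<subseteq> X" "a \<in> set xs"
    "\<forall>b\<in>set xs. b = a \<or> gt a b"
  shows "hd xs = a"
proof -
  obtain h t where xs: "xs = h # t" using assms(4) by (cases xs) auto
  have aX: "a \<in> X" "h \<in> X" using assms(3,4) xs by auto
  have 1: "h = a \<or> gt a h" using assms(5) xs by simp
  have 2: "a = h \<or> gt h a" using assms(2,4) xs by auto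
  show ?thesis using 1 2 fp_trans[OF fp aX(1) aX(2) aX(1)] fp_irr[OF fp aX(1)] xs by auto
qed

lemma last_char:
  assumes fp: "face_poset X gt dim" and "sorted_wrt gt xs" "set xs \<subseteq> X" "a \<in> set xs"
    "\<forall>b\<in>set xs. b = a \<or> gt b a"
  shows "last xs = a"
proof -
  have ne: "xs \<noteq> []" using assms(4) by auto
  have lX: "last xs \<in> set xs" using ne by simp
  have aX: "a \<in> X" "last xs \<in> X" using assms(3,4) lX by auto
  have 1: "last xs = a \<or> gt (last xs) a" using assms(5) lX by simp
  have 2: "a = last xs \<or> gt a (last xs)" using sorted_last[OF assms(2) ne assms(4)] .
  show ?thesis using 1 2 fp_trans[OF fp aX(1) aX(2) aX(1)] fp_irr[OF fp aX(1)] by auto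
qed

lemma sorted_comparable:
  "sorted_wrt R xs \<Longrightarrow> a \<in> set xs \<Longrightarrow> b \<in> set xs \<Longrightarrow> a = b \<or> R a b \<or> R b a"
  by (induction xs) auto


lemma S_iff: "(f, x, y) \<in> matching_paths D \<mu> \<longleftrightarrow> y \<in> D \<and> x = \<mu> y \<and> f = [\<mu> y, y]"
  by (auto simp: matching_paths_def)

theorem proposition3p6:
  fixes X :: "'a set" and gt :: "'a \<Rightarrow> 'a \<Rightarrow> bool" and dim :: "'a \<Rightarrow> nat"
    and D U M :: "'a set" and \<mu> :: "'a \<Rightarrow> 'a"
  assumes "face_poset X gt dim"
    and "acyclic_partial_matching X gt dim D U M \<mu>"
  shows "morse_system (ent_hom X gt) ent_comp ent_id ent_le (matching_paths D \<mu>)"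
proof -
  note fp = assms(1)
  define S where "S = matching_paths D \<mu>"
  define hom where "hom = ent_hom X gt"
  define P where "P = {(d, d'). d \<in> D \<and> d' \<in> D \<and> codim_one_face gt dim d (\<mu> d')}"
  have DX: "D \<subseteq> X" and UX: "U \<subseteq> X" and DU: "D \<inter> U = {}" and inj: "inj_on \<mu> D"
    and muU: "\<And>y. y \<in> D \<Longrightarrow> \<mu> y \<in> U"
    and cof: "\<And>y. y \<in> D \<Longrightarrow> codim_one_face gt dim y (\<mu> y)"
    and antiP: "antisym (P\<^sup>+)"
    using assms(2) unfolding acyclic_partial_matching_def P_def bij_betw_def by auto
  have yX: "\<And>y. y \<in> D \<Longrightarrow> y \<in> X" using DX by auto
  have myX: "\<And>y. y \<in> D \<Longrightarrow> \<mu> y \<in> X" using UX muU by auto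
  have mgt: "\<And>y. y \<in> D \<Longrightarrow> gt (\<mu> y) y" and mdim: "\<And>y. y \<in> D \<Longrightarrow> dim (\<mu> y) = dim y + 1"
    using cof unfolding codim_one_face_def by auto
  have notDU: "\<And>a. a \<in> D \<Longrightarrow> a \<in> U \<Longrightarrow> False" using DU by auto
  have injD: "\<And>a b. a \<in> D \<Longrightarrow> b \<in> D \<Longrightarrow> \<mu> a = \<mu> b \<Longrightarrow> a = b" using inj unfolding inj_on_def by blast

  have exh: "\<And>f x y. (f, x, y) \<in> S \<Longrightarrow> f \<in> hom x y \<and> x \<noteq> y \<and> is_atom hom ent_comp ent_id ent_le f x y \<and>
        (\<forall>(f', x', y')\<in>S. (f', x', y') \<noteq> (f, x, y) \<longrightarrow>
           (\<forall>w. hom x w \<noteq> {} \<and> hom w y \<noteq> {} \<longrightarrow> x' \<noteq> w \<and> y' \<noteq> w))"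
  proof -
    fix f x y assume "(f, x, y) \<in> S"
    then have y: "y \<in> D" and x: "x = \<mu> y" and f: "f = [\<mu> y, y]" unfolding S_def S_iff by auto
    have at: "is_atom hom ent_comp ent_id ent_le f x y"
      using atom_pair[OF fp mgt[OF y] myX[OF y] yX[OF y]] x f hom_def by simp
    have fh: "f \<in> hom x y" using at unfolding is_atom_def by blast
    have xy: "x \<noteq> y" using mgt[OF y] fp_irr[OF fp yX[OF y]] x by auto
    have rest0: "\<And>f' x' y' w. (f', x', y') \<in> S \<Longrightarrow> (f', x', y') \<noteq> (f, x, y) \<Longrightarrow>
        hom x w \<noteq> {} \<Longrightarrow> hom w y \<noteq> {} \<Longrightarrow> x' \<noteq> w \<and> y' \<noteq> w"
    proof -
      fix f' x' y' w
      assume s: "(f', x', y') \<in> S" and ne: "(f', x', y') \<noteq> (f, x, y)"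
        and h1: "hom x w \<noteq> {}" and h2: "hom w y \<noteq> {}"
      have y': "y' \<in> D" and x': "x' = \<mu> y'" and f': "f' = [\<mu> y', y']" using s unfolding S_def S_iff by auto
      have yy: "y' \<noteq> y" using ne x x' f f' by auto
      have xx: "\<mu> y' \<noteq> \<mu> y" using injD[OF y' y] yy by auto
      obtain a where a: "a \<in> ent_hom X gt x w" using h1 hom_def by auto
      obtain b where b: "b \<in> ent_hom X gt w y" using h2 hom_def by auto
      have w1: "x = w \<or> gt x w" and wX: "w \<in> X" using hom_ends[OF a] by auto
      have w2: "w = y \<or> gt w y" using hom_ends[OF b] by auto
      have "w = x \<or> w = y"
      proof (rule ccontr)
        assume "\<not> (w = x \<or> w = y)"
        then have "gt x w" "gt w y" using w1 w2 by auto
        then have "dim w < dim x" "dim y < dim w" using fp_dim[OF fp] wX myX[OF y] yX[OF y] x by auto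
        then show False using mdim[OF y] x by simp
      qed
      moreover have "\<mu> y' \<noteq> y" using notDU[OF y] muU[OF y'] by auto
      moreover have "y' \<noteq> \<mu> y" using notDU[OF y'] muU[OF y] by auto
      ultimately show "x' \<noteq> w \<and> y' \<noteq> w"
        using xx x x' yy by auto
    qed
    have rest: "\<forall>(f', x', y')\<in>S. (f', x', y') \<noteq> (f, x, y) \<longrightarrow>
           (\<forall>w. hom x w \<noteq> {} \<and> hom w y \<noteq> {} \<longrightarrow> x' \<noteq> w \<and> y' \<noteq> w)"
      using rest0 by blast
    show "?thesis f x y" using fh xy at rest by blast
  qed

  define R where "R = {((f0, x0, y0), (f1, x1, y1)). (f0, x0, y0) \<in> S \<and> (f1, x1, y1) \<in> S
                  \<and> hom x0 y1 \<noteq> {}}"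
  have stepP: "\<And>y0 y1. y0 \<in> D \<Longrightarrow> y1 \<in> D \<Longrightarrow> hom (\<mu> y0) y1 \<noteq> {} \<Longrightarrow>
      dim y1 \<le> dim y0 \<and> (dim y1 = dim y0 \<longrightarrow> (y1, y0) \<in> P)"
  proof -
    fix y0 y1 assume y0: "y0 \<in> D" and y1: "y1 \<in> D" and h: "hom (\<mu> y0) y1 \<noteq> {}"
    obtain a where a: "a \<in> ent_hom X gt (\<mu> y0) y1" using h hom_def by auto
    have "\<mu> y0 \<noteq> y1" using notDU[OF y1] muU[OF y0] by auto
    then have g: "gt (\<mu> y0) y1" using hom_ends(5)[OF a] by auto
    then have "dim y1 < dim (\<mu> y0)" using fp_dim[OF fp myX[OF y0] yX[OF y1]] by simp
    then show "dim y1 \<le> dim y0 \<and> (dim y1 = dim y0 \<longrightarrow> (y1, y0) \<in> P)"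
      using mdim[OF y0] g y0 y1 unfolding P_def codim_one_face_def by auto
  qed
  have ord_aux: "\<And>a b. (a, b) \<in> R\<^sup>+ \<Longrightarrow> \<exists>ya yb. a = ([\<mu> ya, ya], \<mu> ya, ya) \<and> b = ([\<mu> yb, yb], \<mu> yb, yb)
      \<and> ya \<in> D \<and> yb \<in> D \<and> dim yb \<le> dim ya \<and> (dim yb = dim ya \<longrightarrow> (yb, ya) \<in> P\<^sup>+)"
  proof -
    fix a b assume "(a, b) \<in> R\<^sup>+"
    then show "?thesis a b"
    proof (induction rule: trancl_induct)
      case (base b)
      obtain f0 x0 y0 f1 x1 y1 where ab: "a = (f0, x0, y0)" "b = (f1, x1, y1)" by (cases a, cases b) auto
      have m: "(f0, x0, y0) \<in> S" "(f1, x1, y1) \<in> S" "hom x0 y1 \<noteq> {}" using base ab unfolding R_def by auto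
      then have y0: "y0 \<in> D" "x0 = \<mu> y0" "f0 = [\<mu> y0, y0]" and y1: "y1 \<in> D" "x1 = \<mu> y1" "f1 = [\<mu> y1, y1]"
        unfolding S_def S_iff by auto
      have "dim y1 \<le> dim y0 \<and> (dim y1 = dim y0 \<longrightarrow> (y1, y0) \<in> P)" using stepP y0 y1 m(3) by auto
      then show ?case using ab y0 y1 by blast
    next
      case (step b c)
      obtain ya yb where IH: "a = ([\<mu> ya, ya], \<mu> ya, ya)" "b = ([\<mu> yb, yb], \<mu> yb, yb)" "ya \<in> D" "yb \<in> D"
        "dim yb \<le> dim ya" "dim yb = dim ya \<longrightarrow> (yb, ya) \<in> P\<^sup>+" using step.IH by blast
      obtain f1 x1 y1 where c: "c = (f1, x1, y1)" by (cases c) auto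
      have m: "(f1, x1, y1) \<in> S" "hom (\<mu> yb) y1 \<noteq> {}" using step.hyps(2) IH(2) c unfolding R_def by auto
      then have y1: "y1 \<in> D" "x1 = \<mu> y1" "f1 = [\<mu> y1, y1]" unfolding S_def S_iff by auto
      have st: "dim y1 \<le> dim yb \<and> (dim y1 = dim yb \<longrightarrow> (y1, yb) \<in> P)" using stepP[OF IH(4) y1(1) m(2)] by auto
      have "dim y1 = dim ya \<longrightarrow> (y1, ya) \<in> P\<^sup>+"
      proof
        assume "dim y1 = dim ya"
        then have "dim yb = dim ya" "dim y1 = dim yb" using st IH(5) by auto
        then show "(y1, ya) \<in> P\<^sup>+" using st IH(6) by auto
      qed
      then show ?case using IH st c y1 by auto
    qed
  qed
  have order: "antisym (R\<^sup>+)"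
  proof (rule antisymI)
    fix a b assume ab: "(a, b) \<in> R\<^sup>+" and ba: "(b, a) \<in> R\<^sup>+"
    obtain ya yb where 1: "a = ([\<mu> ya, ya], \<mu> ya, ya)" "b = ([\<mu> yb, yb], \<mu> yb, yb)"
      "dim yb \<le> dim ya" "dim yb = dim ya \<longrightarrow> (yb, ya) \<in> P\<^sup>+" using ord_aux[OF ab] by blast
    obtain yb' ya' where 2: "b = ([\<mu> yb', yb'], \<mu> yb', yb')" "a = ([\<mu> ya', ya'], \<mu> ya', ya')"
      "dim ya' \<le> dim yb'" "dim ya' = dim yb' \<longrightarrow> (ya', yb') \<in> P\<^sup>+" using ord_aux[OF ba] by blast
    have "ya' = ya" "yb' = yb" using 1 2 by auto
    then have "(yb, ya) \<in> P\<^sup>+" "(ya, yb) \<in> P\<^sup>+" using 1 2 by auto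
    then have "ya = yb" using antiP unfolding antisym_def by blast
    then show "a = b" using 1 by simp
  qed

  have f_hom: "\<And>y. y \<in> D \<Longrightarrow> [\<mu> y, y] \<in> ent_hom X gt (\<mu> y) y"
    using mgt myX yX by (simp add: ent_hom_def)

  have lift: "\<And>f0 x0 y0 f1 x1 y1 g g'. (f0, x0, y0) \<in> S \<Longrightarrow> (f1, x1, y1) \<in> S \<Longrightarrow>
      (f0, x0, y0) \<noteq> (f1, x1, y1) \<Longrightarrow> g \<in> hom x0 x1 \<Longrightarrow> g' \<in> hom y0 y1 \<Longrightarrow>
      ent_le (ent_comp f0 g') (ent_comp g f1) \<Longrightarrow>
      (\<exists>p\<in>hom y0 x1. ent_le (ent_comp f0 p) g \<and> ent_le g' (ent_comp p f1))"
  proof -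
    fix f0 x0 y0 f1 x1 y1 g g'
    assume s0: "(f0, x0, y0) \<in> S" and s1: "(f1, x1, y1) \<in> S" and ne: "(f0, x0, y0) \<noteq> (f1, x1, y1)"
      and g: "g \<in> hom x0 x1" and g': "g' \<in> hom y0 y1" and le: "ent_le (ent_comp f0 g') (ent_comp g f1)"
    have y0: "y0 \<in> D" "x0 = \<mu> y0" "f0 = [\<mu> y0, y0]" using s0 unfolding S_def S_iff by auto
    have y1: "y1 \<in> D" "x1 = \<mu> y1" "f1 = [\<mu> y1, y1]" using s1 unfolding S_def S_iff by auto
    have yy: "y0 \<noteq> y1" using ne y0 y1 by auto
    have g: "g \<in> ent_hom X gt x0 x1" and g': "g' \<in> ent_hom X gt y0 y1" using g g' hom_def by auto
    have f0h: "f0 \<in> ent_hom X gt x0 y0" and f1h: "f1 \<in> ent_hom X gt x1 y1" using f_hom y0 y1 by auto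
    note c1 = comp_hom[OF fp f0h g'] and c2 = comp_hom[OF fp g f1h]
    have sub: "set f0 \<union> set g' \<subseteq> set g \<union> set f1" using le le_iff[OF fp conjunct1[OF c1] conjunct1[OF c2]] c1 c2 by simp
    have x1g: "x1 \<in> set g" and x0g: "x0 \<in> set g" using hom_ends[OF g] by auto
    have y0g: "y0 \<in> set g"
    proof -
      have "y0 \<in> set g \<union> set f1" using sub y0 by auto
      then show ?thesis using y1 yy x1g by auto
    qed
    define p where "p = filter (\<lambda>a. a = y0 \<or> gt y0 a) g"
    have gs: "sorted_wrt gt g" "set g \<subseteq> X" using g by (auto simp: ent_hom_def)
    have ps: "sorted_wrt gt p" "set p \<subseteq> X" "set p \<subseteq> set g" using gs unfolding p_def by (auto simp: sorted_wrt_filter)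
    have y0p: "y0 \<in> set p" using y0g unfolding p_def by simp
    have "y0 = x1 \<or> gt y0 x1" using hom_mem[OF g y0g] by blast
    then have x1p: "x1 \<in> set p" using x1g unfolding p_def by auto
    have hdp: "hd p = y0"
      by (rule hd_char[OF fp ps(1) ps(2) y0p]) (auto simp: p_def)
    have lastp: "last p = x1"
    proof (rule last_char[OF fp ps(1) ps(2) x1p], rule ballI)
      fix b assume "b \<in> set p"
      then have "b \<in> set g" using ps by auto
      then show "b = x1 \<or> gt b x1" using hom_mem[OF g] by blast
    qed
    have ph: "p \<in> ent_hom X gt y0 x1" using ps hdp lastp y0p unfolding ent_hom_def by auto
    note c3 = comp_hom[OF fp f0h ph] and c4 = comp_hom[OF fp ph f1h]
    have "set f0 \<union> set p \<subseteq> set g" using y0 x0g y0g ps by auto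
    then have l1: "ent_le (ent_comp f0 p) g" using le_iff[OF fp conjunct1[OF c3] g] c3 by simp
    have "set g' \<subseteq> set p \<union> set f1"
    proof
      fix c assume c: "c \<in> set g'"
      show "c \<in> set p \<union> set f1"
      proof (cases "c \<in> set f1")
        case True then show ?thesis by simp
      next
        case False
        then have "c \<in> set g" using sub c by auto
        moreover have "c = y0 \<or> gt y0 c" using hom_mem[OF g' c] by blast
        ultimately show ?thesis unfolding p_def by auto
      qed
    qed
    then have l2: "ent_le g' (ent_comp p f1)" using le_iff[OF fp g' conjunct1[OF c4]] c4 by simp
    show "\<exists>p\<in>hom y0 x1. ent_le (ent_comp f0 p) g \<and> ent_le g' (ent_comp p f1)"
      using ph l1 l2 hom_def by auto
  qed

  have sw: "\<And>f0 x0 y0 f1 x1 y1 h l v. (f0, x0, y0) \<in> S \<Longrightarrow> (f1, x1, y1) \<in> S \<Longrightarrow>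
      (f0, x0, y0) \<noteq> (f1, x1, y1) \<Longrightarrow> is_atom hom ent_comp ent_id ent_le h x0 x1 \<Longrightarrow>
      is_atom hom ent_comp ent_id ent_le l y0 y1 \<Longrightarrow> v \<in> hom x0 y1 \<Longrightarrow>
      ent_le (ent_comp f0 l) v \<Longrightarrow> ent_le (ent_comp h f1) v \<Longrightarrow>
      hom y0 x1 \<noteq> {} \<and> (\<forall>q. is_atom hom ent_comp ent_id ent_le q y0 x1 \<longrightarrow> ent_le (ent_comp (ent_comp f0 q) f1) v)"
  proof -
    fix f0 x0 y0 f1 x1 y1 h l v
    assume s0: "(f0, x0, y0) \<in> S" and s1: "(f1, x1, y1) \<in> S" and ne: "(f0, x0, y0) \<noteq> (f1, x1, y1)"
      and ha: "is_atom hom ent_comp ent_id ent_le h x0 x1" and la: "is_atom hom ent_comp ent_id ent_le l y0 y1"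
      and v: "v \<in> hom x0 y1" and le1: "ent_le (ent_comp f0 l) v" and le2: "ent_le (ent_comp h f1) v"
    have y0: "y0 \<in> D" "x0 = \<mu> y0" "f0 = [\<mu> y0, y0]" using s0 unfolding S_def S_iff by auto
    have y1: "y1 \<in> D" "x1 = \<mu> y1" "f1 = [\<mu> y1, y1]" using s1 unfolding S_def S_iff by auto
    have yy: "y0 \<noteq> y1" using ne y0 y1 by auto
    have v: "v \<in> ent_hom X gt x0 y1" using v hom_def by auto
    have f0h: "f0 \<in> ent_hom X gt x0 y0" and f1h: "f1 \<in> ent_hom X gt x1 y1" using f_hom y0 y1 by auto
    have ha': "is_atom (ent_hom X gt) ent_comp ent_id ent_le h x0 x1" using ha hom_def by simp
    have la': "is_atom (ent_hom X gt) ent_comp ent_id ent_le l y0 y1" using la hom_def by simp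
    note hs = atom_set[OF fp ha'] and ls = atom_set[OF fp la']
    note c1 = comp_hom[OF fp f0h ls(2)] and c2 = comp_hom[OF fp hs(2) f1h]
    have sub1: "set f0 \<union> set l \<subseteq> set v" using le1 le_iff[OF fp conjunct1[OF c1] v] c1 by simp
    have sub2: "set h \<union> set f1 \<subseteq> set v" using le2 le_iff[OF fp conjunct1[OF c2] v] c2 by simp
    have y0v: "y0 \<in> set v" using sub1 y0 by auto
    have x1v: "x1 \<in> set v" using sub2 hs by auto
    have xx: "x0 \<noteq> x1" using injD[OF y0(1) y1(1)] yy y0 y1 by auto
    have gx: "gt x0 x1" using hom_mem[OF v x1v] xx by blast
    have not: "\<not> gt x1 y0"
    proof
      assume "gt x1 y0"
      then have "dim y0 < dim x1" "dim x1 < dim x0"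
        using fp_dim[OF fp] gx myX y0 y1 yX by auto
      then show False using mdim[OF y0(1)] y0 by simp
    qed
    have cmp: "y0 = x1 \<or> gt y0 x1"
      using sorted_comparable[of gt v y0 x1] v y0v x1v not unfolding ent_hom_def by auto
    have X01: "y0 \<in> X" "x1 \<in> X" using yX[OF y0(1)] myX[OF y1(1)] y1 by auto
    have nonempty: "hom y0 x1 \<noteq> {}"
    proof (cases "y0 = x1")
      case True
      then have "[y0] \<in> ent_hom X gt y0 x1" using X01 by (simp add: ent_hom_def)
      then show ?thesis using hom_def by auto
    next
      case False
      then have "[y0, x1] \<in> ent_hom X gt y0 x1" using X01 cmp by (simp add: ent_hom_def)
      then show ?thesis using hom_def by auto
    qed
    have "\<forall>q. is_atom hom ent_comp ent_id ent_le q y0 x1 \<longrightarrow> ent_le (ent_comp (ent_comp f0 q) f1) v"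
    proof (intro allI impI)
      fix q assume "is_atom hom ent_comp ent_id ent_le q y0 x1"
      then have qa: "is_atom (ent_hom X gt) ent_comp ent_id ent_le q y0 x1" using hom_def by simp
      note qs = atom_set[OF fp qa]
      note c3 = comp_hom[OF fp f0h qs(2)]
      note c4 = comp_hom[OF fp conjunct1[OF c3] f1h]
      have "set (ent_comp (ent_comp f0 q) f1) \<subseteq> set v"
        using c3 c4 qs sub1 sub2 y0v x1v by auto
      then show "ent_le (ent_comp (ent_comp f0 q) f1) v" using le_iff[OF fp conjunct1[OF c4] v] by simp
    qed
    then show "hom y0 x1 \<noteq> {} \<and> (\<forall>q. is_atom hom ent_comp ent_id ent_le q y0 x1 \<longrightarrow> ent_le (ent_comp (ent_comp f0 q) f1) v)"
      using nonempty by simp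
  qed

  have cel: "cellular hom ent_comp ent_id ent_le" using cellular_ent[OF fp] hom_def by simp
  have A: "\<forall>(f, x, y)\<in>S. f \<in> hom x y \<and> x \<noteq> y \<and> is_atom hom ent_comp ent_id ent_le f x y \<and>
        (\<forall>(f', x', y')\<in>S. (f', x', y') \<noteq> (f, x, y) \<longrightarrow>
           (\<forall>w. hom x w \<noteq> {} \<and> hom w y \<noteq> {} \<longrightarrow> x' \<noteq> w \<and> y' \<noteq> w))"
    using exh by blast
  have B: "\<forall>(f0, x0, y0)\<in>S. \<forall>(f1, x1, y1)\<in>S. (f0, x0, y0) \<noteq> (f1, x1, y1) \<longrightarrow>
        (\<forall>g g'. g \<in> hom x0 x1 \<and> g' \<in> hom y0 y1 \<and> ent_le (ent_comp f0 g') (ent_comp g f1) \<longrightarrow>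
           (\<exists>p\<in>hom y0 x1. ent_le (ent_comp f0 p) g \<and> ent_le g' (ent_comp p f1)))"
    using lift by blast
  have C: "\<forall>(f0, x0, y0)\<in>S. \<forall>(f1, x1, y1)\<in>S. (f0, x0, y0) \<noteq> (f1, x1, y1) \<longrightarrow>
        (\<forall>h l v. is_atom hom ent_comp ent_id ent_le h x0 x1 \<and> is_atom hom ent_comp ent_id ent_le l y0 y1 \<and>
            v \<in> hom x0 y1 \<and> ent_le (ent_comp f0 l) v \<and> ent_le (ent_comp h f1) v \<longrightarrow>
           hom y0 x1 \<noteq> {} \<and>
           (\<forall>q. is_atom hom ent_comp ent_id ent_le q y0 x1 \<longrightarrow> ent_le (ent_comp (ent_comp f0 q) f1) v))"
    using sw by blast
  have "morse_system hom ent_comp ent_id ent_le S"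
    unfolding morse_system_def using cel A order B C unfolding R_def by blast
  then show ?thesis unfolding S_def hom_def .
qed

end
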